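(* Let $O\subset\mathbb R^d$ be open, $\delta\in(0,1)$, $O_\delta=\{(\hat u,\hat v)\in O^2:|\hat u-\hat v|\ge\delta\}$, and $H\in C^{0,0}_c([0,T]\times O^2)$. Define $\Phi^H_\delta(s,\hat u)=\int_{\mathbb R^d}\frac{H(s,\hat v,\hat u)-H(s,\hat u,\hat v)}{|\hat v-\hat u|^{d+\gamma}}\mathbb 1_{\{(\hat u,\hat v)\in O_\delta\}}\mathrm d\hat v$ for $(s,\hat u)\in[0,T]\times\mathbb R^d$, and, for $n\ge1$, $\hat x\in\mathbb Z^d$, $s\in[0,T]$, $\Phi^{H,n}_\delta(s,\tfrac{\hat x}n)=\frac1{n^d}\sum_{\hat y\in\mathbb Z^d}\frac{H(s,\tfrac{\hat y}n,\tfrac{\hat x}n)-H(s,\tfrac{\hat x}n,\tfrac{\hat y}n)}{|\tfrac{\hat y}n-\tfrac{\hat x}n|^{d+\gamma}}\mathbb 1_{\{(\hat x/n,\hat y/n)\in O_\delta\}}$. Then $$\lim_{n\to\infty}\frac1{n^d}\sum_{\hat x\in\mathbb Z^d}\int_0^T\big|\Phi^H_\delta(s,\tfrac{\hat x}n)-\Phi^{H,n}_\delta(s,\tfrac{\hat x}n)\big|\,\mathrm ds=0.$$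
   Context: $T>0$ and $\gamma\in(0,2)$ are fixed, $d\ge1$. $C^{0,0}_c([0,T]\times O^2)$ denotes the continuous functions on $[0,T]\times O^2$ with compact support; integrands are taken to be zero whenever the indicator vanishes. *)

theory Defs
  imports "HOL-Analysis.Analysis"
begin

definition lattice :: "(real^'n) set" where
  "lattice = {x. \<forall>i. x $ i \<in> \<int>}"

definition Odelta :: "(real^'n) set \<Rightarrow> real \<Rightarrow> ((real^'n) \<times> (real^'n)) set" where
  "Odelta Om \<delta> = {(u, v). u \<in> Om \<and> v \<in> Om \<and> norm (u - v) \<ge> \<delta>}"

definition Cc00 :: "real \<Rightarrow> (real^'n) set \<Rightarrow> (real \<Rightarrow> real^'n \<Rightarrow> real^'n \<Rightarrow> real) \<Rightarrow> bool" where
  "Cc00 T Om H \<longleftrightarrow>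
     continuous_on ({0..T} \<times> Om \<times> Om) (\<lambda>(s, u, v). H s u v) \<and>
     (\<exists>K. compact K \<and> K \<subseteq> {0..T} \<times> Om \<times> Om \<and>
          (\<forall>s u v. (s, u, v) \<in> {0..T} \<times> Om \<times> Om - K \<longrightarrow> H s u v = 0))"

definition PhiH :: "(real \<Rightarrow> real^'n \<Rightarrow> real^'n \<Rightarrow> real) \<Rightarrow> (real^'n) set \<Rightarrow> real \<Rightarrow> real
                    \<Rightarrow> real \<Rightarrow> real^'n \<Rightarrow> real" where
  "PhiH H Om \<delta> \<gamma> s u =
     (LINT v|lborel. (if (u, v) \<in> Odelta Om \<delta>
        then (H s v u - H s u v) / norm (v - u) powr (real CARD('n) + \<gamma>) else 0))"

definition PhiHn :: "(real \<Rightarrow> real^'n \<Rightarrow> real^'n \<Rightarrow> real) \<Rightarrow> (real^'n) set \<Rightarrow> real \<Rightarrow> real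
                    \<Rightarrow> nat \<Rightarrow> real \<Rightarrow> real^'n \<Rightarrow> real" where
  "PhiHn H Om \<delta> \<gamma> n s x =
     (1 / real n ^ CARD('n)) *
     (\<Sum>\<^sub>\<infinity>y\<in>lattice.
        (if (x /\<^sub>R real n, y /\<^sub>R real n) \<in> Odelta Om \<delta>
         then (H s (y /\<^sub>R real n) (x /\<^sub>R real n) - H s (x /\<^sub>R real n) (y /\<^sub>R real n))
              / norm (y /\<^sub>R real n - x /\<^sub>R real n) powr (real CARD('n) + \<gamma>)
         else 0))"

end

theory Submission
  imports Defs
begin


definition fl :: "real^'n \<Rightarrow> real^'n" where
  "fl v = (\<chi> i. of_int \<lfloor>v $ i\<rfloor>)"

definition Yset :: "int \<Rightarrow> (real^'n) set" where
  "Yset m = (\<lambda>k. \<chi> i. of_int (k i)) ` (PiE UNIV (\<lambda>_. {-m..m}))"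

lemma Yset_finite: "finite (Yset m)"
  unfolding Yset_def by (intro finite_imageI finite_PiE) auto

lemma Yset_card: "card (Yset m :: (real^'n) set) \<le> nat (2*m+1) ^ CARD('n)"
proof -
  have "card (Yset m :: (real^'n) set) \<le> card (PiE (UNIV::'n set) (\<lambda>_. {-m..m}))"
    unfolding Yset_def by (intro card_image_le finite_PiE) auto
  also have "\<dots> = nat (2*m+1) ^ CARD('n)"
    by (simp add: card_PiE)
  finally show ?thesis .
qed

lemma Yset_lattice: "Yset m \<subseteq> lattice"
  unfolding Yset_def lattice_def by auto

lemma lattice_in_Yset:
  assumes "y \<in> lattice" "norm y \<le> real_of_int m"
  shows "y \<in> Yset m"
proof -
  have yi: "y $ i = of_int \<lfloor>y $ i\<rfloor>" for i
    using assms(1) unfolding lattice_def by (auto elim!: Ints_cases)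
  have "\<bar>y $ i\<bar> \<le> real_of_int m" for i
    using component_le_norm_cart[of y i] assms(2) by linarith
  hence "\<lfloor>y $ i\<rfloor> \<in> {-m..m}" for i
    by (metis abs_le_iff atLeastAtMost_iff floor_mono floor_of_int le_floor_iff minus_le_iff of_int_minus)
  hence mem: "(\<lambda>i. \<lfloor>y $ i\<rfloor>) \<in> PiE UNIV (\<lambda>_. {-m..m})" by auto
  have eq: "y = (\<chi> i. of_int (\<lfloor>y $ i\<rfloor>))"
    using yi by (simp add: vec_eq_iff)
  show ?thesis unfolding Yset_def by (rule image_eqI[where f="\<lambda>k. \<chi> i. of_int (k i)", OF eq mem])
qed

lemma fl_lattice: "fl v \<in> lattice"
  unfolding fl_def lattice_def by auto

lemma fl_dist: "norm ((v::real^'n) - fl v) \<le> real CARD('n)"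
proof -
  have "norm (v - fl v) \<le> (\<Sum>i\<in>UNIV. \<bar>(v - fl v) $ i\<bar>)" by (rule norm_le_l1_cart)
  also have "\<dots> \<le> (\<Sum>i\<in>(UNIV::'n set). 1)"
  proof (intro sum_mono)
    fix i
    have "of_int \<lfloor>v $ i\<rfloor> \<le> v $ i" "v $ i < of_int \<lfloor>v $ i\<rfloor> + 1"
      by linarith+
    moreover have "(v - fl v) $ i = v $ i - of_int \<lfloor>v $ i\<rfloor>" by (simp add: fl_def)
    ultimately show "\<bar>(v - fl v) $ i\<bar> \<le> 1" by linarith
  qed
  finally show ?thesis by simp
qed



lemma cell_eq:
  fixes y :: "real^'n" and N :: real
  assumes "y \<in> lattice" "N > 0"
  shows "{v. fl (N *\<^sub>R v) = y} = {v. \<forall>i. y$i / N \<le> v$i \<and> v$i < (y$i + 1) / N}"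
proof -
  have yi: "y $ i = of_int \<lfloor>y $ i\<rfloor>" for i
    using assms(1) unfolding lattice_def by (auto elim!: Ints_cases)
  have "fl (N *\<^sub>R v) = y \<longleftrightarrow> (\<forall>i. y$i / N \<le> v$i \<and> v$i < (y$i + 1) / N)" for v
  proof -
    have "fl (N *\<^sub>R v) = y \<longleftrightarrow> (\<forall>i. \<lfloor>N * v$i\<rfloor> = \<lfloor>y $ i\<rfloor>)"
      unfolding fl_def vec_eq_iff by (auto, metis yi of_int_eq_iff, metis yi)
    also have "\<dots> \<longleftrightarrow> (\<forall>i. y$i \<le> N * v$i \<and> N * v$i < y$i + 1)"
      by (smt (verit) floor_eq_iff yi)
    also have "\<dots> \<longleftrightarrow> (\<forall>i. y$i / N \<le> v$i \<and> v$i < (y$i + 1) / N)"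
      using assms(2) by (simp add: divide_simps mult.commute)
    finally show ?thesis .
  qed
  thus ?thesis by blast
qed

lemma cell_sets:
  fixes y :: "real^'n" and N :: real
  assumes "y \<in> lattice" "N > 0"
  shows "{v. fl (N *\<^sub>R v) = y} \<in> sets lborel"
proof -
  have "{v. fl (N *\<^sub>R v) = y} = (\<Inter>i. {v::real^'n. y$i / N \<le> v$i} \<inter> {v. v$i < (y$i + 1) / N})"
    using cell_eq[OF assms] by auto
  also have "\<dots> \<in> sets lborel"
    by (intro sets.finite_INT sets.Int borel_closed borel_open closed_halfspace_component_ge_cart
          open_halfspace_component_lt_cart) auto
  finally show ?thesis .
qed

lemma cell_measure:
  fixes y :: "real^'n" and N :: real
  assumes "y \<in> lattice" "N > 0"
  shows "measure lborel {v. fl (N *\<^sub>R v) = y} = (1/N) ^ CARD('n)"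
    and "emeasure lborel {v. fl (N *\<^sub>R v) = y} < \<infinity>"
proof -
  define a :: "real^'n" where "a = (\<chi> i. y$i / N)"
  define b :: "real^'n" where "b = (\<chi> i. (y$i + 1) / N)"
  let ?C = "{v. fl (N *\<^sub>R v) = y}"
  have sub1: "box a b \<subseteq> ?C" and sub2: "?C \<subseteq> cbox a b"
    using cell_eq[OF assms] by (auto simp: mem_box_cart a_def b_def) (meson less_imp_le)+
  have ab: "a $ i \<le> b $ i" for i
    using assms(2) by (simp add: a_def b_def divide_simps)
  have cb: "measure lborel (cbox a b) = (1/N) ^ CARD('n)"
  proof -
    have "cbox a b \<noteq> {}" using ab by (auto simp: interval_eq_empty_cart not_less)
    hence "measure lborel (cbox a b) = prod (\<lambda>i. b$i - a$i) UNIV"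
      by (rule content_cbox_cart)
    also have "\<dots> = prod (\<lambda>i. 1/N) (UNIV::'n set)"
      by (intro prod.cong) (auto simp: a_def b_def diff_divide_distrib[symmetric])
    finally show ?thesis by simp
  qed
  have bx: "measure lborel (box a b) = measure lborel (cbox a b)"
    by (simp add: measure_def emeasure_lborel_box_eq emeasure_lborel_cbox_eq)
  have fm: "cbox a b \<in> fmeasurable lborel"
    by (simp add: fmeasurable_def emeasure_lborel_cbox_eq)
  have C: "?C \<in> sets lborel" by (rule cell_sets[OF assms])
  have "measure lborel (box a b) \<le> measure lborel ?C"
    by (rule measure_mono_fmeasurable[OF sub1]) (auto intro: fmeasurableI2[OF fm sub2] C)
  moreover have "measure lborel ?C \<le> measure lborel (cbox a b)"
    by (rule measure_mono_fmeasurable[OF sub2 C fm])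
  ultimately show "measure lborel ?C = (1/N) ^ CARD('n)" using bx cb by linarith
  show "emeasure lborel ?C < \<infinity>"
    using emeasure_mono[OF sub2, of lborel] fm
    by (simp add: fmeasurable_def less_le_trans)
qed



lemma lattice_support:
  fixes f :: "real^'n \<Rightarrow> real" and N R :: real
  assumes N: "N > 0" and supp: "\<And>v. norm v > R \<Longrightarrow> f v = 0"
    and y: "y \<in> lattice" "f (y /\<^sub>R N) \<noteq> 0"
  shows "y \<in> Yset \<lceil>N * R\<rceil>"
proof (rule lattice_in_Yset[OF y(1)])
  have "norm (y /\<^sub>R N) \<le> R" using supp y(2) by force
  hence "norm y \<le> N * R" using N by (simp add: divide_simps mult.commute)
  thus "norm y \<le> real_of_int \<lceil>N * R\<rceil>" by linarith
qed

lemma riemann_step: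
  fixes f :: "real^'n \<Rightarrow> real" and N R :: real
  assumes N: "N > 0" and supp: "\<And>v. norm v > R \<Longrightarrow> f v = 0"
  shows "integrable lborel (\<lambda>v. f (fl (N *\<^sub>R v) /\<^sub>R N))"
    and "(LINT v|lborel. f (fl (N *\<^sub>R v) /\<^sub>R N)) = (1 / N ^ CARD('n)) * (\<Sum>\<^sub>\<infinity>y\<in>lattice. f (y /\<^sub>R N))"
proof -
  define Y :: "(real^'n) set" where "Y = Yset \<lceil>N * R\<rceil>"
  have finY: "finite Y" unfolding Y_def by (rule Yset_finite)
  have YL: "Y \<subseteq> lattice" unfolding Y_def by (rule Yset_lattice)
  have inY: "y \<in> lattice \<Longrightarrow> f (y /\<^sub>R N) \<noteq> 0 \<Longrightarrow> y \<in> Y" for y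
    unfolding Y_def by (rule lattice_support[where f=f and R=R, OF N supp])
  define C :: "real^'n \<Rightarrow> (real^'n) set" where "C y = {v. fl (N *\<^sub>R v) = y}" for y
  have Cs: "y \<in> Y \<Longrightarrow> C y \<in> sets lborel" for y
    unfolding C_def using cell_sets[OF _ N] YL by blast
  have Cm: "y \<in> Y \<Longrightarrow> measure lborel (C y) = (1/N) ^ CARD('n)" for y
    unfolding C_def using cell_measure(1)[OF _ N] YL by blast
  have Cf: "y \<in> Y \<Longrightarrow> emeasure lborel (C y) < \<infinity>" for y
    unfolding C_def using cell_measure(2)[OF _ N] YL by blast
  have eq: "f (fl (N *\<^sub>R v) /\<^sub>R N) = (\<Sum>y\<in>Y. f (y /\<^sub>R N) * indicator (C y) v)" for v
  proof -
    have "(\<Sum>y\<in>Y. f (y /\<^sub>R N) * indicator (C y) v) = (\<Sum>y\<in>Y. if y = fl (N *\<^sub>R v) then f (y /\<^sub>R N) else 0)"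
      by (intro sum.cong) (auto simp: C_def indicator_def)
    also have "\<dots> = (if fl (N *\<^sub>R v) \<in> Y then f (fl (N *\<^sub>R v) /\<^sub>R N) else 0)"
      using finY by (simp add: sum.delta')
    also have "\<dots> = f (fl (N *\<^sub>R v) /\<^sub>R N)"
      using inY[OF fl_lattice] by auto
    finally show ?thesis by simp
  qed
  have int: "integrable lborel (\<lambda>v. \<Sum>y\<in>Y. f (y /\<^sub>R N) * indicator (C y) v)"
    by (intro Bochner_Integration.integrable_sum integrable_mult_right) (use Cs Cf in \<open>auto simp: integrable_indicator_iff\<close>)
  thus "integrable lborel (\<lambda>v. f (fl (N *\<^sub>R v) /\<^sub>R N))" unfolding eq .
  have "(LINT v|lborel. f (fl (N *\<^sub>R v) /\<^sub>R N)) = (LINT v|lborel. (\<Sum>y\<in>Y. f (y /\<^sub>R N) * indicator (C y) v))"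
    unfolding eq ..
  also have "\<dots> = (\<Sum>y\<in>Y. LINT v|lborel. f (y /\<^sub>R N) * indicator (C y) v)"
    by (intro Bochner_Integration.integral_sum integrable_mult_right) (use Cs Cf in \<open>auto simp: integrable_indicator_iff\<close>)
  also have "\<dots> = (\<Sum>y\<in>Y. f (y /\<^sub>R N) * (1/N) ^ CARD('n))"
    by (intro sum.cong refl) (simp add: Cm)
  also have "\<dots> = (1 / N ^ CARD('n)) * (\<Sum>y\<in>Y. f (y /\<^sub>R N))"
    by (simp add: sum_distrib_left power_one_over mult.commute)
  also have "(\<Sum>y\<in>Y. f (y /\<^sub>R N)) = (\<Sum>\<^sub>\<infinity>y\<in>lattice. f (y /\<^sub>R N))"
  proof -
    have "(\<Sum>\<^sub>\<infinity>y\<in>lattice. f (y /\<^sub>R N)) = (\<Sum>\<^sub>\<infinity>y\<in>Y. f (y /\<^sub>R N))"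
      by (rule infsum_cong_neutral) (use inY YL in auto)
    thus ?thesis using finY by simp
  qed
  finally show "(LINT v|lborel. f (fl (N *\<^sub>R v) /\<^sub>R N)) = (1 / N ^ CARD('n)) * (\<Sum>\<^sub>\<infinity>y\<in>lattice. f (y /\<^sub>R N))" .
qed



lemma ext_cont:
  fixes H :: "real \<Rightarrow> real^'n \<Rightarrow> real^'n \<Rightarrow> real" and Om :: "(real^'n) set"
  assumes Om: "open Om"
    and cont: "continuous_on ({0..T} \<times> Om \<times> Om) (\<lambda>(s, u, v). H s u v)"
    and K: "compact K" "K \<subseteq> {0..T} \<times> Om \<times> Om"
    and zero: "\<And>s u v. (s, u, v) \<in> {0..T} \<times> Om \<times> Om - K \<Longrightarrow> H s u v = 0"
  shows "continuous_on ({0..T} \<times> UNIV \<times> UNIV) (\<lambda>(s, u, v). if u \<in> Om \<and> v \<in> Om then H s u v else 0)"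
proof -
  let ?E = "(\<lambda>(s, u, v). if u \<in> Om \<and> v \<in> Om then H s u v else 0)"
  define S where "S = {0..T} \<times> Om \<times> Om"
  define S' where "S' = ({0..T} \<times> UNIV \<times> UNIV) - K"
  have X: "{0..T} \<times> UNIV \<times> UNIV = S \<union> S'" unfolding S_def S'_def using K(2) by auto
  have o1: "openin (top_of_set (S \<union> S')) S"
  proof -
    have "S = (S \<union> S') \<inter> (UNIV \<times> Om \<times> Om)" unfolding S_def S'_def by auto
    moreover have "open (UNIV \<times> Om \<times> (Om :: (real^'n) set) :: (real \<times> _) set)"
      using Om by (intro open_Times) auto
    ultimately show ?thesis by (metis openin_open_Int inf_commute)
  qed
  have o2: "openin (top_of_set (S \<union> S')) S'"
  proof -
    have "S' = (S \<union> S') \<inter> (- K)" unfolding S_def S'_def using K(2) by auto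
    moreover have "open (- K)" using K(1) by (simp add: compact_imp_closed open_Compl)
    ultimately show ?thesis by (metis openin_open_Int inf_commute)
  qed
  have c1: "continuous_on S ?E"
    by (rule continuous_on_eq[OF cont[folded S_def]]) (auto simp: S_def)
  have c2: "continuous_on S' ?E"
  proof (rule continuous_on_eq[OF continuous_on_const[of S' 0]])
    fix z assume "z \<in> S'"
    then obtain s u v where z: "z = (s, u, v)" "s \<in> {0..T}" "(s, u, v) \<notin> K"
      unfolding S'_def by auto
    thus "0 = ?E z" using zero[of s u v] by auto
  qed
  show ?thesis unfolding X by (rule continuous_on_Un_local_open[OF o1 o2 c1 c2])
qed

lemma ucont_zero_outside:
  fixes F :: "real \<times> (real^'n) \<times> (real^'n) \<Rightarrow> real"
  assumes cont: "continuous_on ({0..T} \<times> (UNIV::(real^'n) set) \<times> (UNIV::(real^'n) set)) F"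
    and zero: "\<And>s u v. s \<in> {0..T} \<Longrightarrow> norm u > R \<or> norm v > R \<Longrightarrow> F (s, u, v) = 0"
  shows "\<exists>B. \<forall>z \<in> {0..T} \<times> (UNIV::(real^'n) set) \<times> (UNIV::(real^'n) set). \<bar>F z\<bar> \<le> B"
    and "\<epsilon> > 0 \<Longrightarrow> \<exists>\<eta>>0. \<forall>z \<in> {0..T} \<times> (UNIV::(real^'n) set) \<times> (UNIV::(real^'n) set). \<forall>z' \<in> {0..T} \<times> (UNIV::(real^'n) set) \<times> (UNIV::(real^'n) set).
            dist z z' < \<eta> \<longrightarrow> \<bar>F z - F z'\<bar> < \<epsilon>"
proof -
  define C :: "(real \<times> (real^'n) \<times> (real^'n)) set" where "C = {0..T} \<times> cball 0 (R+1) \<times> cball 0 (R+1)"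
  have Cc: "compact C" unfolding C_def by (intro compact_Times compact_cball compact_Icc)
  have CX: "C \<subseteq> {0..T} \<times> (UNIV::(real^'n) set) \<times> (UNIV::(real^'n) set)" unfolding C_def by auto
  have contC: "continuous_on C F" by (rule continuous_on_subset[OF cont CX])
  have out: "F z = 0" if "z \<in> {0..T} \<times> (UNIV::(real^'n) set) \<times> (UNIV::(real^'n) set)" "z \<notin> C" for z
    using that zero by (force simp: C_def)
  obtain B where B: "\<forall>w\<in>F ` C. norm w \<le> B"
    using compact_imp_bounded[OF compact_continuous_image[OF contC Cc]] by (auto simp: bounded_iff)
  show "\<exists>B. \<forall>z \<in> {0..T} \<times> (UNIV::(real^'n) set) \<times> (UNIV::(real^'n) set). \<bar>F z\<bar> \<le> B"
  proof (intro exI[of _ "max B 0"] ballI)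
    fix z assume z: "z \<in> {0..T} \<times> (UNIV::(real^'n) set) \<times> (UNIV::(real^'n) set)"
    show "\<bar>F z\<bar> \<le> max B 0"
    proof (cases "z \<in> C")
      case True thus ?thesis using B by fastforce
    next
      case False
      thus ?thesis using out[OF z False] by simp
    qed
  qed
  show "\<exists>\<eta>>0. \<forall>z \<in> {0..T} \<times> (UNIV::(real^'n) set) \<times> (UNIV::(real^'n) set). \<forall>z' \<in> {0..T} \<times> (UNIV::(real^'n) set) \<times> (UNIV::(real^'n) set).
            dist z z' < \<eta> \<longrightarrow> \<bar>F z - F z'\<bar> < \<epsilon>" if e: "\<epsilon> > 0"
  proof -
    obtain d where d: "d > 0" "\<forall>x\<in>C. \<forall>x'\<in>C. dist x' x < d \<longrightarrow> dist (F x') (F x) < \<epsilon>"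
      using compact_uniformly_continuous[OF contC Cc] e unfolding uniformly_continuous_on_def by metis
    show "\<exists>\<eta>>0. \<forall>z \<in> {0..T} \<times> (UNIV::(real^'n) set) \<times> (UNIV::(real^'n) set). \<forall>z' \<in> {0..T} \<times> (UNIV::(real^'n) set) \<times> (UNIV::(real^'n) set).
            dist z z' < \<eta> \<longrightarrow> \<bar>F z - F z'\<bar> < \<epsilon>"
    proof (intro exI[of _ "min d 1"] conjI ballI impI)
      show "min d 1 > 0" using d by simp
      fix z z' assume z: "z \<in> {0..T} \<times> (UNIV::(real^'n) set) \<times> (UNIV::(real^'n) set)" and z': "z' \<in> {0..T} \<times> (UNIV::(real^'n) set) \<times> (UNIV::(real^'n) set)"
        and dz: "dist z z' < min d 1"
      obtain s u v where zz: "z = (s, u, v)" by (cases z) auto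
      obtain s' u' v' where zz': "z' = (s', u', v')" by (cases z') auto
      have du: "dist u u' < 1" and dv: "dist v v' < 1"
        using dz dist_fst_le[of "(u,v)" "(u',v')"] dist_snd_le[of "(u,v)" "(u',v')"]
          dist_snd_le[of z z'] unfolding zz zz' by auto
      have nu: "norm u \<le> norm u' + 1" "norm u' \<le> norm u + 1"
        using du norm_triangle_ineq3[of u u'] unfolding dist_norm
        by (smt (verit) norm_minus_commute norm_triangle_ineq2)+
      have nv: "norm v \<le> norm v' + 1" "norm v' \<le> norm v + 1"
        using dv unfolding dist_norm
        by (smt (verit) norm_minus_commute norm_triangle_ineq2)+
      show "\<bar>F z - F z'\<bar> < \<epsilon>"
      proof (cases "z \<in> C \<and> z' \<in> C")
        case True thus ?thesis using d dz by (simp add: dist_real_def abs_minus_commute dist_commute)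
      next
        case False
        hence "norm u > R \<or> norm v > R" "norm u' > R \<or> norm v' > R"
          using z z' nu nv unfolding zz zz' C_def by auto
        hence "F z = 0" "F z' = 0" using zero z z' unfolding zz zz' by auto
        thus ?thesis using e by simp
      qed
    qed
  qed
qed



lemma inner_bound:
  fixes F :: "real \<times> (real^'n) \<times> (real^'n) \<Rightarrow> real" and u :: "real^'n"
  assumes s: "s \<in> {0..T}" and N: "N \<ge> 1" and h: "h = real CARD('n) / N"
    and h\<eta>: "h < \<eta>" and h\<delta>: "h \<le> \<delta>" and h1: "h \<le> 1" and \<delta>: "\<delta> > 0"
    and \<epsilon>: "\<epsilon> \<ge> 0" and B: "B \<ge> 0"
    and cont: "continuous_on ({0..T} \<times> (UNIV::(real^'n) set) \<times> (UNIV::(real^'n) set)) F"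
    and uc: "\<forall>z \<in> {0..T} \<times> (UNIV::(real^'n) set) \<times> (UNIV::(real^'n) set). \<forall>z' \<in> {0..T} \<times> (UNIV::(real^'n) set) \<times> (UNIV::(real^'n) set).
            dist z z' < \<eta> \<longrightarrow> \<bar>F z - F z'\<bar> < \<epsilon>"
    and bnd: "\<forall>z \<in> {0..T} \<times> (UNIV::(real^'n) set) \<times> (UNIV::(real^'n) set). \<bar>F z\<bar> \<le> B"
    and zero: "\<And>s u v. s \<in> {0..T} \<Longrightarrow> norm u > R \<or> norm v > R \<Longrightarrow> F (s, u, v) = 0"
  shows "\<bar>(LINT v|lborel. F (s, u, v) * indicator (- ball u \<delta>) v)
          - (1 / N ^ CARD('n)) * (\<Sum>\<^sub>\<infinity>y\<in>lattice. F (s, u, y /\<^sub>R N) * indicator (- ball u \<delta>) (y /\<^sub>R N))\<bar>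
         \<le> \<epsilon> * measure lborel (cball (0::real^'n) (R+1)) + B * (measure lborel (cball u (\<delta>+h)) - measure lborel (ball u (\<delta>-h)))"
proof -
  define g where "g v = F (s, u, v) * indicator (- ball u \<delta>) v" for v
  have Npos: "N > 0" using N by simp
  have h0: "0 \<le> h" unfolding h using Npos by simp
  have cbf: "\<And>c r. emeasure lborel (cball (c::real^'n) r) < \<infinity>" by (rule emeasure_lborel_cball_finite)
  have gsupp: "norm v > R \<Longrightarrow> g v = 0" for v using zero[OF s] by (simp add: g_def)
  have Fb: "\<bar>F (s, u, v)\<bar> \<le> B" for v
  proof -
    have "(s, u, v) \<in> {0..T} \<times> (UNIV::(real^'n) set) \<times> (UNIV::(real^'n) set)" using s by simp
    thus ?thesis using bnd by blast
  qed
  have gb: "\<bar>g v\<bar> \<le> B" for v using Fb[of v] B by (auto simp: g_def indicator_def)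
  have Fc: "continuous_on UNIV (\<lambda>v. F (s, u, v))"
    by (rule continuous_on_compose2[OF cont]) (use s in \<open>auto intro!: continuous_intros\<close>)
  have gm: "g \<in> borel_measurable lborel"
    unfolding g_def
    by (intro borel_measurable_times borel_measurable_continuous_onI[OF Fc, folded measurable_lborel2]
        borel_measurable_indicator) (auto intro: borel_closed simp: closed_Compl)
  have gi: "integrable lborel g"
  proof (rule Bochner_Integration.integrable_bound[OF _ gm])
    show "integrable lborel (\<lambda>v. B * indicator (cball (0::real^'n) R) v)"
      by (intro integrable_mult_right) (use cbf in \<open>auto simp: integrable_indicator_iff\<close>)
    show "AE v in lborel. norm (g v) \<le> norm (B * indicator (cball (0::real^'n) R) v)"
      using gb gsupp B by (auto simp: indicator_def not_le)
  qed
  define \<phi> where "\<phi> v = g (fl (N *\<^sub>R v) /\<^sub>R N)" for v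
  have \<phi>i: "integrable lborel \<phi>" unfolding \<phi>_def by (rule riemann_step(1)[where f=g and R=R, OF Npos gsupp])
  have \<phi>eq: "(LINT v|lborel. \<phi> v) = (1 / N ^ CARD('n)) * (\<Sum>\<^sub>\<infinity>y\<in>lattice. g (y /\<^sub>R N))"
    unfolding \<phi>_def by (rule riemann_step(2)[where f=g and R=R, OF Npos gsupp])
  define A1 :: "(real^'n) set" where "A1 = cball 0 (R+1)"
  define A2 where "A2 = cball u (\<delta>+h) - ball u (\<delta>-h)"
  have A1s: "A1 \<in> sets lborel" "emeasure lborel A1 < \<infinity>"
    unfolding A1_def using cbf by auto
  have A2s: "A2 \<in> sets lborel" "emeasure lborel A2 < \<infinity>"
  proof -
    show "A2 \<in> sets lborel" unfolding A2_def by auto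
    have "emeasure lborel A2 \<le> emeasure lborel (cball u (\<delta>+h))"
      unfolding A2_def by (intro emeasure_mono) auto
    thus "emeasure lborel A2 < \<infinity>" using emeasure_lborel_cball_finite[of u "\<delta>+h"]
      by (simp add: le_less_trans)
  qed
  have pw: "\<bar>g v - \<phi> v\<bar> \<le> \<epsilon> * indicator A1 v + B * indicator A2 v" for v
  proof -
    define v' where "v' = fl (N *\<^sub>R v) /\<^sub>R N"
    have "v - v' = (N *\<^sub>R v - fl (N *\<^sub>R v)) /\<^sub>R N" using Npos
      by (simp add: v'_def algebra_simps)
    hence "norm (v - v') = norm (N *\<^sub>R v - fl (N *\<^sub>R v)) / N" using Npos by (simp add: divide_inverse_commute)
    also have "\<dots> \<le> real CARD('n) / N" by (intro divide_right_mono) (use Npos fl_dist in auto)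
    finally have dvv: "dist v v' \<le> h" unfolding h dist_norm .
    have dz: "dist (s, u, v) (s, u, v') < \<eta>"
      using dvv h\<eta> by (simp add: dist_Pair_Pair)
    have X: "(s, u, v) \<in> {0..T} \<times> (UNIV::(real^'n) set) \<times> (UNIV::(real^'n) set)"
            "(s, u, v') \<in> {0..T} \<times> (UNIV::(real^'n) set) \<times> (UNIV::(real^'n) set)" using s by auto
    have i1: "0 \<le> \<epsilon> * indicator A1 v" "0 \<le> B * indicator A2 v" using \<epsilon> B by auto
    have dtri: "dist u v \<le> dist u v' + h" "dist u v' \<le> dist u v + h"
      using dist_triangle[of u v v'] dist_triangle[of u v' v] dvv by (auto simp: dist_commute)
    show ?thesis
    proof (cases "v \<in> - ball u \<delta>"; cases "v' \<in> - ball u \<delta>")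
      assume a: "v \<in> - ball u \<delta>" and a': "v' \<in> - ball u \<delta>"
      have eq: "g v - \<phi> v = F (s, u, v) - F (s, u, v')"
        using a a' by (simp add: g_def \<phi>_def v'_def[symmetric])
      show ?thesis
      proof (cases "norm v > R + 1")
        case True
        have "norm v \<le> norm v' + h" using dvv norm_triangle_ineq2[of v v'] by (simp add: dist_norm)
        hence "norm v' > R" using True h1 by linarith
        hence "F (s, u, v) = 0" "F (s, u, v') = 0" using zero[OF s] True by auto
        thus ?thesis using eq i1 by simp
      next
        case False
        hence "indicator A1 v = (1::real)" by (simp add: A1_def indicator_def)
        moreover have "\<bar>F (s, u, v) - F (s, u, v')\<bar> < \<epsilon>" using uc X dz by blast
        ultimately show ?thesis using eq i1 by simp
      qed
    next
      assume a: "v \<in> - ball u \<delta>" and a': "v' \<notin> - ball u \<delta>"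
      have eq: "g v - \<phi> v = F (s, u, v)"
        using a a' by (simp add: g_def \<phi>_def v'_def[symmetric])
      have "v \<in> A2" using a a' dtri unfolding A2_def by auto
      hence "indicator A2 v = (1::real)" by simp
      moreover have "\<bar>F (s, u, v)\<bar> \<le> B" using bnd X by blast
      ultimately show ?thesis using eq i1 by simp
    next
      assume a: "v \<notin> - ball u \<delta>" and a': "v' \<in> - ball u \<delta>"
      have eq: "g v - \<phi> v = - F (s, u, v')"
        using a a' by (simp add: g_def \<phi>_def v'_def[symmetric])
      have "v \<in> A2" using a a' dtri unfolding A2_def by auto
      hence "indicator A2 v = (1::real)" by simp
      moreover have "\<bar>F (s, u, v')\<bar> \<le> B" using bnd X by blast
      ultimately show ?thesis using eq i1 by simp
    next
      assume a: "v \<notin> - ball u \<delta>" and a': "v' \<notin> - ball u \<delta>"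
      have eq: "g v - \<phi> v = 0"
        using a a' by (simp add: g_def \<phi>_def v'_def[symmetric])
      show ?thesis using eq i1 by simp
    qed
  qed
  have "\<bar>(LINT v|lborel. g v) - (LINT v|lborel. \<phi> v)\<bar> = \<bar>LINT v|lborel. g v - \<phi> v\<bar>"
    using gi \<phi>i by simp
  also have "\<dots> \<le> (LINT v|lborel. \<epsilon> * indicator A1 v + B * indicator A2 v)"
    by (intro integral_abs_bound_integral) (use A1s A2s gi \<phi>i pw in \<open>auto simp: integrable_indicator_iff\<close>)
  also have "\<dots> = \<epsilon> * measure lborel A1 + B * measure lborel A2"
    using A1s A2s by (simp add: integrable_indicator_iff)
  also have "measure lborel A2 = measure lborel (cball u (\<delta>+h)) - measure lborel (ball u (\<delta>-h))"
    unfolding A2_def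
    by (intro measure_Diff) (use h\<delta> h0 cbf[of u "\<delta>+h"] in \<open>auto\<close>)
  finally show ?thesis using \<phi>eq by (simp add: g_def A1_def)
qed



lemma set_int_bound:
  fixes f :: "real \<Rightarrow> real"
  assumes b: "\<And>s. s \<in> {0..T} \<Longrightarrow> \<bar>f s\<bar> \<le> b" and T: "T \<ge> 0"
  shows "(LINT s:{0..T}|lborel. \<bar>f s\<bar>) \<le> T * b"
    and "0 \<le> (LINT s:{0..T}|lborel. \<bar>f s\<bar>)"
proof -
  have b0: "0 \<le> b" using b[of 0] T by force
  have "(LINT s|lborel. indicator {0..T} s *\<^sub>R \<bar>f s\<bar>) \<le> (LINT s|lborel. indicator {0..T} s * b)"
  proof (rule integral_mono')
    show "integrable lborel (\<lambda>s. indicator {0..T} s * b)"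
      by (intro integrable_mult_left) (use T in \<open>auto simp: integrable_indicator_iff emeasure_lborel_Icc\<close>)
    show "indicator {0..T} s *\<^sub>R \<bar>f s\<bar> \<le> indicator {0..T} s * b" for s
      using b[of s] by (auto simp: indicator_def)
    show "0 \<le> indicator {0..T} s * b" for s using b0 by auto
  qed
  also have "\<dots> = T * b" using T by (simp add: integrable_indicator_iff emeasure_lborel_Icc)
  finally show "(LINT s:{0..T}|lborel. \<bar>f s\<bar>) \<le> T * b" unfolding set_lebesgue_integral_def .
  show "0 \<le> (LINT s:{0..T}|lborel. \<bar>f s\<bar>)"
    unfolding set_lebesgue_integral_def by (intro Bochner_Integration.integral_nonneg) auto
qed

lemma set_int_zero:
  fixes f :: "real \<Rightarrow> real"
  assumes "\<And>s. s \<in> {0..T} \<Longrightarrow> f s = 0"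
  shows "(LINT s:{0..T}|lborel. \<bar>f s\<bar>) = 0"
proof -
  have "(\<lambda>s. indicator {0..T} s *\<^sub>R \<bar>f s\<bar>) = (\<lambda>s. 0::real)"
    using assms by (auto simp: indicator_def)
  thus ?thesis unfolding set_lebesgue_integral_def by simp
qed

lemma ann_measure:
  fixes u :: "real^'n"
  assumes "0 \<le> h" "h \<le> \<delta>"
  shows "measure lborel (cball u (\<delta>+h)) - measure lborel (ball u (\<delta>-h))
       = ((\<delta>+h) ^ CARD('n) - (\<delta>-h) ^ CARD('n)) * measure lborel (ball (0::real^'n) 1)"
  using assms content_cball_conv_ball[of u "\<delta>+h"] content_ball_conv_unit_ball[of "\<delta>+h" u]
    content_ball_conv_unit_ball[of "\<delta>-h" u]
  by (simp add: algebra_simps)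



theorem mainTheorem16:
  fixes Om :: "(real^'n) set" and H :: "real \<Rightarrow> real^'n \<Rightarrow> real^'n \<Rightarrow> real"
    and T \<gamma> \<delta> :: real
  assumes "T > 0" and "0 < \<gamma>" and "\<gamma> < 2"
    and "open Om" and "0 < \<delta>" and "\<delta> < 1"
    and "Cc00 T Om H"
  shows "(\<lambda>n::nat. (1 / real n ^ CARD('n)) *
           (\<Sum>\<^sub>\<infinity>x\<in>lattice. (LINT s:{0..T}|lborel.
               \<bar>PhiH H Om \<delta> \<gamma> s (x /\<^sub>R real n) - PhiHn H Om \<delta> \<gamma> n s x\<bar>)))
         \<longlonglongrightarrow> 0"
proof -
  define p where "p = real CARD('n) + \<gamma>"
  define X where "X = {0..T} \<times> (UNIV::(real^'n) set) \<times> (UNIV::(real^'n) set)"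
  obtain K where Hc: "continuous_on ({0..T} \<times> Om \<times> Om) (\<lambda>(s, u, v). H s u v)"
    and K: "compact K" "K \<subseteq> {0..T} \<times> Om \<times> Om"
    and Kz: "\<And>s u v. (s, u, v) \<in> {0..T} \<times> Om \<times> Om - K \<Longrightarrow> H s u v = 0"
    using assms(7) unfolding Cc00_def by blast
  define E where "E = (\<lambda>(s::real, u::real^'n, v::real^'n). if u \<in> Om \<and> v \<in> Om then H s u v else 0)"
  have Ec: "continuous_on X E"
    unfolding E_def X_def by (rule ext_cont[OF assms(4) Hc K Kz])
  obtain R0 where R0: "\<forall>z\<in>K. norm z \<le> R0"
    using compact_imp_bounded[OF K(1)] unfolding bounded_iff by blast
  define R where "R = max R0 0"
  have R: "R \<ge> 0" unfolding R_def by simp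
  have Ez: "E (s, u, v) = 0" if s: "s \<in> {0..T}" and uv: "norm u > R \<or> norm v > R" for s u v
  proof (rule ccontr)
    assume ne: "E (s, u, v) \<noteq> 0"
    hence uv': "u \<in> Om" "v \<in> Om" "H s u v \<noteq> 0" by (auto simp: E_def split: if_splits)
    hence "(s, u, v) \<in> K" using Kz s by blast
    hence "norm (s, u, v) \<le> R" using R0 unfolding R_def by force
    moreover have "norm u \<le> norm (s, u, v)" "norm v \<le> norm (s, u, v)"
      using norm_snd_le[where x=s and y="(u, v)"] norm_fst_le[where x=u and y=v] norm_snd_le[where x=u and y=v] by linarith+
    ultimately show False using uv by linarith
  qed
  define F where "F = (\<lambda>(s::real, u::real^'n, v::real^'n). (E (s, v, u) - E (s, u, v)) / (max (norm (v - u)) \<delta>) powr p)"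
  have Fc: "continuous_on X F"
  proof -
    have sw: "continuous_on X (\<lambda>z. E (fst z, snd (snd z), fst (snd z)))"
      by (rule continuous_on_compose2[OF Ec]) (auto simp: X_def intro!: continuous_intros)
    have id: "continuous_on X (\<lambda>z. E (fst z, fst (snd z), snd (snd z)))"
      by (rule continuous_on_eq[OF Ec]) auto
    have "continuous_on X (\<lambda>z. (E (fst z, snd (snd z), fst (snd z)) - E (fst z, fst (snd z), snd (snd z)))
            / (max (norm (snd (snd z) - fst (snd z))) \<delta>) powr p)"
      using assms(5) by (intro continuous_intros sw id) auto
    thus ?thesis by (rule continuous_on_eq) (auto simp: F_def split: prod.splits)
  qed
  have Fz: "F (s, u, v) = 0" if "s \<in> {0..T}" "norm u > R \<or> norm v > R" for s u v
    using Ez[OF that(1)] that(2) by (auto simp: F_def)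
  obtain B0 where B0: "\<forall>z \<in> X. \<bar>F z\<bar> \<le> B0"
    using ucont_zero_outside(1)[OF Fc[unfolded X_def] Fz] unfolding X_def by blast
  define B where "B = max B0 0"
  have B: "B \<ge> 0" "\<forall>z \<in> X. \<bar>F z\<bar> \<le> B" using B0 unfolding B_def by force+
  have gF: "(if (u, v) \<in> Odelta Om \<delta> then (H s v u - H s u v) / norm (v - u) powr p else 0)
           = F (s, u, v) * indicator (- ball u \<delta>) v" if s: "s \<in> {0..T}" for s u v
  proof (cases "u \<in> Om \<and> v \<in> Om")
    case True
    have nm: "norm (v - u) = norm (u - v)" by (rule norm_minus_commute)
    show ?thesis
    proof (cases "\<delta> \<le> norm (u - v)")
      case True2: True
      thus ?thesis using True nm
        by (simp add: Odelta_def F_def E_def indicator_def dist_norm max_def)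
    next
      case False
      thus ?thesis using True
        by (simp add: Odelta_def indicator_def dist_norm)
    qed
  next
    case False
    thus ?thesis by (auto simp: Odelta_def F_def E_def)
  qed
  have PhiH_eq: "PhiH H Om \<delta> \<gamma> s u = (LINT v|lborel. F (s, u, v) * indicator (- ball u \<delta>) v)"
    if "s \<in> {0..T}" for s u
    unfolding PhiH_def p_def[symmetric] using gF[OF that] by simp
  have PhiHn_eq: "PhiHn H Om \<delta> \<gamma> n s x = (1 / real n ^ CARD('n)) *
      (\<Sum>\<^sub>\<infinity>y\<in>lattice. F (s, x /\<^sub>R real n, y /\<^sub>R real n) * indicator (- ball (x /\<^sub>R real n) \<delta>) (y /\<^sub>R real n))"
    if "s \<in> {0..T}" for s x n
    unfolding PhiHn_def p_def[symmetric] using gF[OF that] by simp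
  define Vb where "Vb = measure lborel (cball (0::real^'n) (R+1))"
  define c1 where "c1 = measure lborel (ball (0::real^'n) 1)"
  define A where "A = (2*R+3) ^ CARD('n) * T + 1"
  have Vb0: "0 \<le> Vb" unfolding Vb_def by simp
  have A0: "0 \<le> (2*R+3) ^ CARD('n) * T" using R assms(1) by simp
  have A: "A > 0" unfolding A_def using A0 by linarith
  show ?thesis
  proof (rule LIMSEQ_I)
    fix r :: real assume r: "r > 0"
    define \<epsilon> where "\<epsilon> = r / (4 * A * (Vb + 1))"
    have \<epsilon>: "\<epsilon> > 0" unfolding \<epsilon>_def using r A Vb0 by simp
    obtain \<eta> where \<eta>: "\<eta> > 0" "\<forall>z\<in>X. \<forall>z'\<in>X. dist z z' < \<eta> \<longrightarrow> \<bar>F z - F z'\<bar> < \<epsilon>"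
      using ucont_zero_outside(2)[OF Fc[unfolded X_def] Fz \<epsilon>] unfolding X_def by blast
    have lim0: "(\<lambda>n. real CARD('n) / real n) \<longlonglongrightarrow> 0" by (rule lim_const_over_n)
    have limA: "(\<lambda>n. ((\<delta> + real CARD('n) / real n) ^ CARD('n) - (\<delta> - real CARD('n) / real n) ^ CARD('n)) * c1) \<longlonglongrightarrow> 0"
    proof -
      have "(\<lambda>n. ((\<delta> + real CARD('n) / real n) ^ CARD('n) - (\<delta> - real CARD('n) / real n) ^ CARD('n)) * c1)
            \<longlonglongrightarrow> ((\<delta> + 0) ^ CARD('n) - (\<delta> - 0) ^ CARD('n)) * c1"
        by (intro tendsto_intros lim0)
      thus ?thesis by simp
    qed
    have ev1: "eventually (\<lambda>n. real CARD('n) / real n < min \<eta> (min \<delta> 1)) sequentially"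
      by (rule order_tendstoD(2)[OF lim0]) (use \<eta> assms(5) in simp)
    have ev2: "eventually (\<lambda>n. ((\<delta> + real CARD('n) / real n) ^ CARD('n) - (\<delta> - real CARD('n) / real n) ^ CARD('n)) * c1
                 < r / (4 * A * (B + 1))) sequentially"
      by (rule order_tendstoD(2)[OF limA]) (use r A B in simp)
    have ev3: "eventually (\<lambda>n. n \<ge> (1::nat)) sequentially" by (rule eventually_ge_at_top)
    obtain n0 where n0: "\<forall>n\<ge>n0. real CARD('n) / real n < min \<eta> (min \<delta> 1) \<and>
        ((\<delta> + real CARD('n) / real n) ^ CARD('n) - (\<delta> - real CARD('n) / real n) ^ CARD('n)) * c1
                 < r / (4 * A * (B + 1)) \<and> n \<ge> 1"
      using eventually_conj[OF ev1 eventually_conj[OF ev2 ev3]] unfolding eventually_sequentially by blast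
    show "\<exists>no. \<forall>n\<ge>no. norm ((1 / real n ^ CARD('n)) *
           (\<Sum>\<^sub>\<infinity>x\<in>lattice. (LINT s:{0..T}|lborel.
               \<bar>PhiH H Om \<delta> \<gamma> s (x /\<^sub>R real n) - PhiHn H Om \<delta> \<gamma> n s x\<bar>)) - 0) < r"
    proof (intro exI[of _ n0] allI impI)
      fix n assume "n \<ge> n0"
      hence hn: "real CARD('n) / real n < min \<eta> (min \<delta> 1)"
        and an: "((\<delta> + real CARD('n) / real n) ^ CARD('n) - (\<delta> - real CARD('n) / real n) ^ CARD('n)) * c1
                 < r / (4 * A * (B + 1))" and n1: "n \<ge> 1" using n0 by auto
      define N where "N = real n"
      define h where "h = real CARD('n) / N"
      have N1: "N \<ge> 1" unfolding N_def using n1 by simp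
      have h\<eta>: "h < \<eta>" and h\<delta>: "h \<le> \<delta>" and h1: "h \<le> 1" using hn unfolding h_def N_def by auto
      have h0: "0 \<le> h" unfolding h_def using N1 by simp
      define bnd where "bnd = \<epsilon> * Vb + B * (((\<delta>+h) ^ CARD('n) - (\<delta>-h) ^ CARD('n)) * c1)"
      have pt: "\<bar>PhiH H Om \<delta> \<gamma> s (x /\<^sub>R real n) - PhiHn H Om \<delta> \<gamma> n s x\<bar> \<le> bnd"
        if s: "s \<in> {0..T}" for s x
      proof -
        have "\<bar>PhiH H Om \<delta> \<gamma> s (x /\<^sub>R real n) - PhiHn H Om \<delta> \<gamma> n s x\<bar> =
          \<bar>(LINT v|lborel. F (s, x /\<^sub>R N, v) * indicator (- ball (x /\<^sub>R N) \<delta>) v)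
          - (1 / N ^ CARD('n)) * (\<Sum>\<^sub>\<infinity>y\<in>lattice. F (s, x /\<^sub>R N, y /\<^sub>R N) * indicator (- ball (x /\<^sub>R N) \<delta>) (y /\<^sub>R N))\<bar>"
          by (simp add: PhiH_eq[OF s] PhiHn_eq[OF s] N_def)
        also have "\<dots> \<le> \<epsilon> * measure lborel (cball (0::real^'n) (R+1)) + B * (measure lborel (cball (x /\<^sub>R N) (\<delta>+h)) - measure lborel (ball (x /\<^sub>R N) (\<delta>-h)))"
          by (rule inner_bound[OF s N1 h_def h\<eta> h\<delta> h1 assms(5) less_imp_le[OF \<epsilon>] B(1)
                Fc[unfolded X_def] \<eta>(2)[unfolded X_def] B(2)[unfolded X_def] Fz])
        also have "\<dots> = bnd" unfolding bnd_def c1_def Vb_def using ann_measure[OF h0 h\<delta>, of "x /\<^sub>R N"] by simp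
        finally show ?thesis .
      qed
      have bnd0: "0 \<le> bnd" using pt[of 0 0] assms(1) by force
      have e1: "\<epsilon> * Vb \<le> r / (4 * A)"
      proof -
        have "\<epsilon> * Vb = (r / (4 * A)) * (Vb / (Vb + 1))" unfolding \<epsilon>_def by (simp add: field_simps)
        also have "\<dots> \<le> (r / (4 * A)) * 1"
          using r A Vb0 by (intro mult_left_mono) (auto simp: divide_simps)
        finally show ?thesis by simp
      qed
      have e2: "B * (((\<delta>+h) ^ CARD('n) - (\<delta>-h) ^ CARD('n)) * c1) \<le> r / (4 * A)"
      proof -
        have "B * (((\<delta>+h) ^ CARD('n) - (\<delta>-h) ^ CARD('n)) * c1) \<le> B * (r / (4 * A * (B + 1)))"
          using an B(1) unfolding h_def N_def by (intro mult_left_mono) auto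
        also have "\<dots> = (r / (4 * A)) * (B / (B + 1))" using B(1) by (simp add: field_simps)
        also have "\<dots> \<le> (r / (4 * A)) * 1"
          using r A B(1) by (intro mult_left_mono) (auto simp: divide_simps)
        finally show ?thesis by simp
      qed
      have Abnd: "A * bnd \<le> r / 2"
      proof -
        have "bnd \<le> r / (2 * A)" using e1 e2 unfolding bnd_def by (simp add: field_simps)
        hence "A * bnd \<le> A * (r / (2 * A))" using A by (intro mult_left_mono) auto
        thus ?thesis using A by simp
      qed
      define m where "m = \<lceil>N * R\<rceil>"
      have m0: "m \<ge> 0"
      proof -
        have "0 \<le> N * R" using N1 R by simp
        thus ?thesis unfolding m_def by linarith
      qed
      define Y where "Y = (Yset m :: (real^'n) set)"
      define tm where "tm x = (LINT s:{0..T}|lborel. \<bar>PhiH H Om \<delta> \<gamma> s (x /\<^sub>R real n) - PhiHn H Om \<delta> \<gamma> n s x\<bar>)" for x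
      have tm_le: "tm x \<le> T * bnd" "0 \<le> tm x" for x
        unfolding tm_def using set_int_bound[OF pt] assms(1) by auto
      have tm0: "tm x = 0" if x: "x \<in> lattice" "x \<notin> Y" for x
      proof -
        have "norm (x /\<^sub>R N) > R"
        proof (rule ccontr)
          assume "\<not> norm (x /\<^sub>R N) > R"
          hence "norm x \<le> N * R" using N1 by (simp add: divide_simps mult.commute)
          hence "norm x \<le> real_of_int m" unfolding m_def by linarith
          hence "x \<in> Y" unfolding Y_def by (rule lattice_in_Yset[OF x(1)])
          thus False using x(2) by simp
        qed
        hence z: "F (s, x /\<^sub>R N, v) = 0" if "s \<in> {0..T}" for s v using Fz that by blast
        have "PhiH H Om \<delta> \<gamma> s (x /\<^sub>R real n) - PhiHn H Om \<delta> \<gamma> n s x = 0" if s: "s \<in> {0..T}" for s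
          by (simp add: PhiH_eq[OF s] PhiHn_eq[OF s] z[OF s] N_def[symmetric])
        thus ?thesis unfolding tm_def by (rule set_int_zero)
      qed
      have finY: "finite Y" unfolding Y_def by (rule Yset_finite)
      have YL: "Y \<subseteq> lattice" unfolding Y_def by (rule Yset_lattice)
      have sum_eq: "(\<Sum>\<^sub>\<infinity>x\<in>lattice. tm x) = (\<Sum>x\<in>Y. tm x)"
      proof -
        have "(\<Sum>\<^sub>\<infinity>x\<in>lattice. tm x) = (\<Sum>\<^sub>\<infinity>x\<in>Y. tm x)"
          by (rule infsum_cong_neutral) (use tm0 YL in auto)
        thus ?thesis using finY by simp
      qed
      have sum_le: "(\<Sum>x\<in>Y. tm x) \<le> real (card Y) * (T * bnd)"
        using sum_bounded_above[of Y tm "T * bnd"] tm_le(1) by simp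
      have cardY: "real (card Y) \<le> N ^ CARD('n) * (2*R+3) ^ CARD('n)"
      proof -
        have "card Y \<le> nat (2*m+1) ^ CARD('n)" unfolding Y_def by (rule Yset_card)
        hence "real (card Y) \<le> real (nat (2*m+1)) ^ CARD('n)"
          by (metis of_nat_le_iff of_nat_power)
        also have "real (nat (2*m+1)) = 2 * real_of_int m + 1" using m0 by simp
        also have "\<dots> \<le> N * (2*R+3)"
        proof -
          have "real_of_int m \<le> N * R + 1" unfolding m_def by linarith
          hence "2 * real_of_int m + 1 \<le> 2 * N * R + 3" by linarith
          also have "\<dots> \<le> N * (2*R+3)" using N1 by (simp add: algebra_simps)
          finally show ?thesis .
        qed
        hence "(2 * real_of_int m + 1) ^ CARD('n) \<le> (N * (2*R+3)) ^ CARD('n)"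
          using m0 by (intro power_mono) auto
        finally show ?thesis by (simp add: power_mult_distrib)
      qed
      have Npos: "N ^ CARD('n) > 0" using N1 by simp
      have "(1 / N ^ CARD('n)) * (\<Sum>x\<in>Y. tm x) \<le> (1 / N ^ CARD('n)) * (real (card Y) * (T * bnd))"
        using sum_le Npos by (intro mult_left_mono) auto
      also have "\<dots> \<le> (1 / N ^ CARD('n)) * ((N ^ CARD('n) * (2*R+3) ^ CARD('n)) * (T * bnd))"
        using cardY Npos bnd0 assms(1) by (intro mult_left_mono mult_right_mono) auto
      also have "\<dots> = (2*R+3) ^ CARD('n) * T * bnd" using Npos N1 by simp
      also have "\<dots> \<le> A * bnd" unfolding A_def using bnd0 by (simp add: algebra_simps)
      also have "\<dots> < r" using Abnd r by simp
      finally have up: "(1 / N ^ CARD('n)) * (\<Sum>x\<in>Y. tm x) < r" .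
      have lo: "0 \<le> (1 / N ^ CARD('n)) * (\<Sum>x\<in>Y. tm x)"
        using Npos tm_le(2) by (intro mult_nonneg_nonneg sum_nonneg) auto
      show "norm ((1 / real n ^ CARD('n)) *
           (\<Sum>\<^sub>\<infinity>x\<in>lattice. (LINT s:{0..T}|lborel.
               \<bar>PhiH H Om \<delta> \<gamma> s (x /\<^sub>R real n) - PhiHn H Om \<delta> \<gamma> n s x\<bar>)) - 0) < r"
      proof -
        have "(\<Sum>\<^sub>\<infinity>x\<in>lattice. (LINT s:{0..T}|lborel.
               \<bar>PhiH H Om \<delta> \<gamma> s (x /\<^sub>R real n) - PhiHn H Om \<delta> \<gamma> n s x\<bar>)) = (\<Sum>\<^sub>\<infinity>x\<in>lattice. tm x)"
          by (simp add: tm_def)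
        thus ?thesis using up lo unfolding sum_eq N_def by simp
      qed
    qed
  qed
qed

end
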